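(* Let $\star$ be a Weyl star product on $C^\infty(\mathbb R^N)[[\alpha]]$ satisfying the stability of unity. Then for every $n\ge2$, all indices $i_1,\dots,i_n$ and every $f$, $$\sum_{k=1}^nA\Big(x^{i_k},\ \prod_{l\ne k}x^{i_l},\ f\Big)=0,$$ where $\prod_{l\ne k}x^{i_l}$ is the ordinary product of the coordinate functions $x^{i_l}$ with $l\ne k$.
   Context: Work on $\mathbb R^N$ with real coordinates $x^1,\dots,x^N$. Functions are complex-valued smooth functions on $\mathbb R^N$. A star product is a $\mathbb C[[\alpha]]$-bilinear map on $C^\infty(\mathbb R^N)[[\alpha]]$ (formal power series in the real formal parameter $\alpha$). On functions it is given by $f\star g=fg+\sum_{r\ge1}(i\alpha)^rC_r(f,g)$, where the $C_r$ are bilinear bidifferential operators. The associator is $A(f,g,h)=f\star(g\star h)-(f\star g)\star h$. Definitions: - Weyl star product: for every $n\ge1$, all indices $i_1,\dots,i_n$ and all $f$, $$(x^{i_1}\cdots x^{i_n})\star f=\frac1{n!}\sum_{\sigma\in S_n}x^{i_{\sigma(1)}}\star\big(x^{i_{\sigma(2)}}\star(\cdots\star(x^{i_{\sigma(n)}}\star f)\cdots)\big),$$ where $x^{i_1}\cdots x^{i_n}$ denotes the ordinary product. - Stability of unity: $f\star1=1\star f=f$ for all $f$. *)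

theory Defs
  imports "HOL-Analysis.Analysis" "HOL-Combinatorics.Permutations"
begin

text \<open>Functions on R^N: complex-valued functions on the type real^'n (N = CARD('n)).
  Formal power series in alpha with function coefficients: nat => function,
  the m-th entry being the coefficient of alpha^m.\<close>

type_synonym 'n func = "real^'n \<Rightarrow> complex"
type_synonym 'n ser = "nat \<Rightarrow> 'n func"

definition partial :: "'n::finite \<Rightarrow> 'n func \<Rightarrow> 'n func" where
  "partial i g = (\<lambda>x. vector_derivative (\<lambda>t::real. g (x + t *\<^sub>R axis i 1)) (at 0))"

fun pd :: "'n::finite list \<Rightarrow> 'n func \<Rightarrow> 'n func" where
  "pd [] g = g"
| "pd (i # is) g = partial i (pd is g)"

definition smooth :: "'n::finite func \<Rightarrow> bool" where
  "smooth g \<longleftrightarrow> (\<forall>is. continuous_on UNIV (pd is g) \<and>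
      (\<forall>i x. (\<lambda>t::real. pd is g (x + t *\<^sub>R axis i 1)) differentiable (at 0)))"

definition smooth_ser :: "'n::finite ser \<Rightarrow> bool" where
  "smooth_ser F \<longleftrightarrow> (\<forall>m. smooth (F m))"

definition bidiff :: "('n::finite func \<Rightarrow> 'n func \<Rightarrow> 'n func) \<Rightarrow> bool" where
  "bidiff D \<longleftrightarrow> (\<exists>S c. finite (S :: ('n list \<times> 'n list) set) \<and> (\<forall>p\<in>S. smooth (c p)) \<and>
      (\<forall>f g. smooth f \<longrightarrow> smooth g \<longrightarrow>
         D f g = (\<lambda>x. \<Sum>p\<in>S. c p x * pd (fst p) f x * pd (snd p) g x)))"

text \<open>A star product is determined by its cochains C r (r >= 1), which are
  bidifferential operators; C 0 is the pointwise product.\<close>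
definition star_cochains :: "(nat \<Rightarrow> 'n::finite func \<Rightarrow> 'n func \<Rightarrow> 'n func) \<Rightarrow> bool" where
  "star_cochains C \<longleftrightarrow> (\<forall>r\<ge>1. bidiff (C r))"

definition Cfull :: "(nat \<Rightarrow> 'n func \<Rightarrow> 'n func \<Rightarrow> 'n func) \<Rightarrow> nat \<Rightarrow> 'n func \<Rightarrow> 'n func \<Rightarrow> 'n func" where
  "Cfull C r f g = (if r = 0 then (\<lambda>x. f x * g x) else C r f g)"

text \<open>The C[[alpha]]-bilinear extension of f*g = fg + sum_r (i alpha)^r C_r(f,g)
  to formal power series, coefficientwise.\<close>
definition star :: "(nat \<Rightarrow> 'n func \<Rightarrow> 'n func \<Rightarrow> 'n func) \<Rightarrow> 'n ser \<Rightarrow> 'n ser \<Rightarrow> 'n ser" where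
  "star C F G = (\<lambda>m x. \<Sum>p\<le>m. \<Sum>q\<le>m - p. \<i> ^ (m - p - q) * Cfull C (m - p - q) (F p) (G q) x)"

definition emb :: "'n func \<Rightarrow> 'n ser" where
  "emb f = (\<lambda>m. if m = 0 then f else (\<lambda>_. 0))"

definition coord :: "'n::finite \<Rightarrow> 'n func" where
  "coord i = (\<lambda>x. complex_of_real (x $ i))"

definition coordprod :: "'n::finite list \<Rightarrow> 'n func" where
  "coordprod is = (\<lambda>x. \<Prod>j<length is. coord (is ! j) x)"

definition lstar :: "(nat \<Rightarrow> 'n::finite func \<Rightarrow> 'n func \<Rightarrow> 'n func) \<Rightarrow> 'n list \<Rightarrow> 'n ser \<Rightarrow> 'n ser" where
  "lstar C js F = foldr (\<lambda>i G. star C (emb (coord i)) G) js F"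

definition associator :: "(nat \<Rightarrow> 'n func \<Rightarrow> 'n func \<Rightarrow> 'n func) \<Rightarrow> 'n ser \<Rightarrow> 'n ser \<Rightarrow> 'n ser \<Rightarrow> 'n ser" where
  "associator C F G H = (\<lambda>m x. star C F (star C G H) m x - star C (star C F G) H m x)"

definition weyl :: "(nat \<Rightarrow> 'n::finite func \<Rightarrow> 'n func \<Rightarrow> 'n func) \<Rightarrow> bool" where
  "weyl C \<longleftrightarrow> (\<forall>is f. length is \<ge> 1 \<longrightarrow> smooth f \<longrightarrow>
      star C (emb (coordprod is)) (emb f) =
      (\<lambda>m x. (1 / of_nat (fact (length is))) *
         (\<Sum>\<sigma>\<in>{\<sigma>. \<sigma> permutes {..<length is}}.
            lstar C (map (\<lambda>j. is ! \<sigma> j) [0..<length is]) (emb f) m x)))"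

definition stable_unity :: "(nat \<Rightarrow> 'n::finite func \<Rightarrow> 'n func \<Rightarrow> 'n func) \<Rightarrow> bool" where
  "stable_unity C \<longleftrightarrow> (\<forall>f. smooth f \<longrightarrow>
      star C (emb f) (emb (\<lambda>_. 1)) = emb f \<and> star C (emb (\<lambda>_. 1)) (emb f) = emb f)"

end

theory Submission
  imports Defs "HOL-Combinatorics.Multiset_Permutations"
begin

definition LD :: "'n::finite func \<Rightarrow> bool" where
  "LD g \<longleftrightarrow> (\<forall>i x. (\<lambda>t::real. g (x + t *\<^sub>R axis i 1)) differentiable (at 0))"

lemma smooth_iff: "smooth g \<longleftrightarrow> (\<forall>is. continuous_on UNIV (pd is g) \<and> LD (pd is g))"
  unfolding smooth_def LD_def by auto

lemma pd_append: "pd (is @ js) g = pd is (pd js g)"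
  by (induction "is") auto

lemma partial_lincomb:
  assumes "finite J" "\<forall>j\<in>J. LD (g j)"
  shows "partial i (\<lambda>x. \<Sum>j\<in>J. c j * g j x) = (\<lambda>x. \<Sum>j\<in>J. c j * partial i (g j) x)"
proof
  fix x
  have "\<And>j. j \<in> J \<Longrightarrow> ((\<lambda>t::real. g j (x + t *\<^sub>R axis i 1)) has_vector_derivative
      vector_derivative (\<lambda>t::real. g j (x + t *\<^sub>R axis i 1)) (at 0)) (at 0)"
    using assms(2) unfolding LD_def by (auto intro: vector_derivative_works[THEN iffD1])
  hence "((\<lambda>t::real. \<Sum>j\<in>J. c j * g j (x + t *\<^sub>R axis i 1)) has_vector_derivative
      (\<Sum>j\<in>J. c j * vector_derivative (\<lambda>t::real. g j (x + t *\<^sub>R axis i 1)) (at 0))) (at 0)"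
    by (intro has_vector_derivative_sum has_vector_derivative_mult_right) auto
  thus "partial i (\<lambda>x. \<Sum>j\<in>J. c j * g j x) x = (\<Sum>j\<in>J. c j * partial i (g j) x)"
    unfolding partial_def by (rule vector_derivative_at)
qed

lemma LD_lincomb:
  assumes "finite J" "\<forall>j\<in>J. LD (g j)"
  shows "LD (\<lambda>x. \<Sum>j\<in>J. c j * g j x)"
  using assms unfolding LD_def by (auto intro!: differentiable_sum differentiable_mult)

lemma LD_add: "LD u \<Longrightarrow> LD v \<Longrightarrow> LD (\<lambda>x. u x + v x)"
  unfolding LD_def by (auto intro!: differentiable_add)

lemma LD_mult: "LD u \<Longrightarrow> LD v \<Longrightarrow> LD (\<lambda>x. u x * v x)"
  unfolding LD_def by (auto intro!: differentiable_mult)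

lemma partial_add:
  assumes "LD u" "LD v"
  shows "partial i (\<lambda>x. u x + v x) = (\<lambda>x. partial i u x + partial i v x)"
  using assms unfolding LD_def partial_def by (auto intro!: ext vector_derivative_add_at)

lemma partial_mult:
  assumes "LD u" "LD v"
  shows "partial i (\<lambda>x. u x * v x) = (\<lambda>x. partial i u x * v x + u x * partial i v x)"
  using assms unfolding LD_def partial_def by (auto intro!: ext simp: vector_derivative_mult_at)

lemma partial_const: "partial i (\<lambda>_. c) = (\<lambda>_. 0)"
  unfolding partial_def by (auto intro!: ext vector_derivative_at)

lemma pd_const: "pd is (\<lambda>_. c) = (\<lambda>_. if is = [] then c else 0)"
  by (induction "is") (auto simp: partial_const)

lemma LD_const: "LD (\<lambda>_. c)"
  unfolding LD_def by auto

lemma smooth_const: "smooth (\<lambda>_. c)"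
  unfolding smooth_iff pd_const by (auto simp: LD_const)

lemma smooth_pd: "smooth g \<Longrightarrow> smooth (pd js g)"
  unfolding smooth_iff by (metis pd_append)

lemma smooth_partial: "smooth g \<Longrightarrow> smooth (partial i g)"
  using smooth_pd[of g "[i]"] by simp

lemma pd_lincomb:
  assumes "finite J" "\<forall>j\<in>J. smooth (g j)"
  shows "pd b (\<lambda>x. \<Sum>j\<in>J. c j * g j x) = (\<lambda>x. \<Sum>j\<in>J. c j * pd b (g j) x)"
proof (induction b)
  case Nil then show ?case by simp
next
  case (Cons i b)
  have "\<forall>j\<in>J. LD (pd b (g j))" using assms(2) unfolding smooth_iff by blast
  then show ?case using Cons by (simp add: partial_lincomb[OF assms(1)])
qed

lemma smooth_lincomb:
  assumes "finite J" "\<forall>j\<in>J. smooth (g j)"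
  shows "smooth (\<lambda>x. \<Sum>j\<in>J. c j * g j x)"
  unfolding smooth_iff pd_lincomb[OF assms]
proof (intro allI conjI)
  fix "is"
  show "continuous_on UNIV (\<lambda>x. \<Sum>j\<in>J. c j * pd is (g j) x)"
    using assms(2) unfolding smooth_iff by (auto intro!: continuous_intros)
  show "LD (\<lambda>x. \<Sum>j\<in>J. c j * pd is (g j) x)"
    using assms unfolding smooth_iff by (auto intro!: LD_lincomb)
qed

lemma smooth_add: "smooth u \<Longrightarrow> smooth v \<Longrightarrow> smooth (\<lambda>x. u x + v x)"
  using smooth_lincomb[of "{0::nat,1}" "\<lambda>j. if j = 0 then u else v" "\<lambda>_. 1"] by simp

lemma smooth_scale: "smooth u \<Longrightarrow> smooth (\<lambda>x. c * u x)"
  using smooth_lincomb[of "{0::nat}" "\<lambda>j. u" "\<lambda>_. c"] by simp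

lemma smooth_sum: "finite J \<Longrightarrow> \<forall>j\<in>J. smooth (g j) \<Longrightarrow> smooth (\<lambda>x. \<Sum>j\<in>J. g j x)"
  using smooth_lincomb[of J g "\<lambda>_. 1"] by simp

lemma pd_add_weak:
  assumes "\<forall>ks. length ks < length js \<longrightarrow> LD (pd ks u) \<and> LD (pd ks v)"
  shows "pd js (\<lambda>x. u x + v x) = (\<lambda>x. pd js u x + pd js v x)"
  using assms
proof (induction js)
  case Nil then show ?case by simp
next
  case (Cons i js)
  have "pd (i # js) (\<lambda>x. u x + v x) = partial i (\<lambda>x. pd js u x + pd js v x)"
    using Cons by simp
  also have "\<dots> = (\<lambda>x. pd (i # js) u x + pd (i # js) v x)"
    using Cons.prems by (simp add: partial_add)
  finally show ?case .
qed

lemma smooth_mult_aux: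
  "\<forall>g h. smooth g \<longrightarrow> smooth h \<longrightarrow>
     continuous_on UNIV (pd is (\<lambda>x. g x * h x)) \<and> LD (pd is (\<lambda>x. g x * h x))"
proof (induction "is" rule: length_induct)
  case (1 "is")
  show ?case
  proof (intro allI impI)
    fix g h :: "'a func" assume g: "smooth g" and h: "smooth h"
    show "continuous_on UNIV (pd is (\<lambda>x. g x * h x)) \<and> LD (pd is (\<lambda>x. g x * h x))"
    proof (cases "is" rule: rev_exhaust)
      case Nil
      have "continuous_on UNIV g" "continuous_on UNIV h" "LD g" "LD h"
        using g h unfolding smooth_iff by (metis pd.simps(1))+
      then show ?thesis using Nil by (auto intro!: continuous_intros LD_mult)
    next
      case (snoc js i)
      have gi: "smooth (partial i g)" and hi: "smooth (partial i h)"
        using g h by (auto intro: smooth_partial)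
      have LDg: "LD g" "LD h" using g h unfolding smooth_iff by (metis pd.simps(1))+
      have e: "pd is (\<lambda>x. g x * h x) = pd js (\<lambda>x. partial i g x * h x + g x * partial i h x)"
        using snoc by (simp add: pd_append partial_mult[OF LDg])
      have IH: "\<And>ks. length ks < length is \<Longrightarrow>
          continuous_on UNIV (pd ks (\<lambda>x. partial i g x * h x)) \<and> LD (pd ks (\<lambda>x. partial i g x * h x))
        \<and> continuous_on UNIV (pd ks (\<lambda>x. g x * partial i h x)) \<and> LD (pd ks (\<lambda>x. g x * partial i h x))"
        using 1 gi hi g h by blast
      have e2: "pd js (\<lambda>x. partial i g x * h x + g x * partial i h x)
          = (\<lambda>x. pd js (\<lambda>x. partial i g x * h x) x + pd js (\<lambda>x. g x * partial i h x) x)"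
        by (rule pd_add_weak) (use IH snoc in auto)
      have "length js < length is" using snoc by simp
      then show ?thesis unfolding e e2 using IH[of js]
        by (auto intro!: continuous_intros LD_add)
    qed
  qed
qed

lemma smooth_mult: "smooth g \<Longrightarrow> smooth h \<Longrightarrow> smooth (\<lambda>x. g x * h x)"
  using smooth_mult_aux unfolding smooth_iff by blast


lemma partial_coord: "partial j (coord i) = (\<lambda>_. complex_of_real (axis j 1 $ i))"
proof
  fix x :: "real^'a"
  have "((\<lambda>t::real. complex_of_real (x $ i + t * axis j 1 $ i)) has_vector_derivative
          complex_of_real (axis j 1 $ i)) (at 0)"
    by (rule has_vector_derivative_of_real) (auto intro!: derivative_eq_intros)
  then show "partial j (coord i) x = complex_of_real (axis j 1 $ i)"
    unfolding partial_def coord_def by (simp add: vector_derivative_at)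
qed

lemma LD_coord: "LD (coord i)"
  unfolding LD_def coord_def
  by (auto intro!: derivative_intros differentiable_compose[of complex_of_real] bounded_linear_imp_differentiable bounded_linear_of_real)

lemma smooth_coord: "smooth (coord i)"
  unfolding smooth_iff
proof
  fix "is" :: "'a list"
  show "continuous_on UNIV (pd is (coord i)) \<and> LD (pd is (coord i))"
  proof (cases "is" rule: rev_exhaust)
    case Nil then show ?thesis
      by (auto simp: coord_def LD_coord[unfolded coord_def] intro!: continuous_intros)
  next
    case (snoc js j)
    then show ?thesis by (simp add: pd_append partial_coord pd_const LD_const)
  qed
qed

lemma coordprod_Cons: "coordprod (a # l) = (\<lambda>x. coord a x * coordprod l x)"
  unfolding coordprod_def by (auto simp del: prod.lessThan_Suc simp add: prod.lessThan_Suc_shift)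

lemma smooth_coordprod: "smooth (coordprod l)"
proof (induction l)
  case Nil then show ?case by (simp add: coordprod_def smooth_const)
next
  case (Cons a l) then show ?case by (simp add: coordprod_Cons smooth_mult smooth_coord)
qed

lemma bidiff_smooth:
  assumes "bidiff D" "smooth f" "smooth g"
  shows "smooth (D f g)"
proof -
  obtain S c where S: "finite (S :: ('a list \<times> 'a list) set)" "\<forall>p\<in>S. smooth (c p)"
    "\<And>f g. smooth f \<Longrightarrow> smooth g \<Longrightarrow>
         D f g = (\<lambda>x. \<Sum>p\<in>S. c p x * pd (fst p) f x * pd (snd p) g x)"
    using assms(1) unfolding bidiff_def by blast
  show ?thesis unfolding S(3)[OF assms(2,3)]
    using S(1,2) assms(2,3) by (auto intro!: smooth_sum smooth_mult smooth_pd)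
qed

lemma bidiff_lin2:
  assumes "bidiff D" "smooth a" "finite J" "\<forall>j\<in>J. smooth (g j)"
  shows "D a (\<lambda>x. \<Sum>j\<in>J. c j * g j x) = (\<lambda>x. \<Sum>j\<in>J. c j * D a (g j) x)"
proof -
  obtain S cc where S: "finite (S :: ('a list \<times> 'a list) set)"
    "\<And>f g. smooth f \<Longrightarrow> smooth g \<Longrightarrow>
         D f g = (\<lambda>x. \<Sum>p\<in>S. cc p x * pd (fst p) f x * pd (snd p) g x)"
    using assms(1) unfolding bidiff_def by blast
  have sm: "smooth (\<lambda>x. \<Sum>j\<in>J. c j * g j x)" using assms(3,4) by (rule smooth_lincomb)
  show ?thesis
    unfolding S(2)[OF assms(2) sm] pd_lincomb[OF assms(3,4)]
    using assms(4) by (auto intro!: ext simp: S(2)[OF assms(2)] sum_distrib_left sum_distrib_right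
        intro: sum.swap[THEN trans] sum.cong simp: mult_ac)
qed

lemma bidiff_lin1:
  assumes "bidiff D" "smooth a" "finite J" "\<forall>j\<in>J. smooth (g j)"
  shows "D (\<lambda>x. \<Sum>j\<in>J. c j * g j x) a = (\<lambda>x. \<Sum>j\<in>J. c j * D (g j) a x)"
proof -
  obtain S cc where S: "finite (S :: ('a list \<times> 'a list) set)"
    "\<And>f g. smooth f \<Longrightarrow> smooth g \<Longrightarrow>
         D f g = (\<lambda>x. \<Sum>p\<in>S. cc p x * pd (fst p) f x * pd (snd p) g x)"
    using assms(1) unfolding bidiff_def by blast
  have sm: "smooth (\<lambda>x. \<Sum>j\<in>J. c j * g j x)" using assms(3,4) by (rule smooth_lincomb)
  show ?thesis
    unfolding S(2)[OF sm assms(2)] pd_lincomb[OF assms(3,4)]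
    using assms(4) by (auto intro!: ext simp: S(2)[OF _ assms(2)] sum_distrib_left sum_distrib_right
        intro: sum.swap[THEN trans] sum.cong simp: mult_ac)
qed


lemma Cfull_smooth:
  "star_cochains C \<Longrightarrow> smooth f \<Longrightarrow> smooth g \<Longrightarrow> smooth (Cfull C r f g)"
  unfolding Cfull_def star_cochains_def by (auto intro: smooth_mult bidiff_smooth)

lemma Cfull_lin2:
  assumes "star_cochains C" "smooth a" "finite J" "\<forall>j\<in>J. smooth (g j)"
  shows "Cfull C r a (\<lambda>x. \<Sum>j\<in>J. c j * g j x) x = (\<Sum>j\<in>J. c j * Cfull C r a (g j) x)"
proof (cases "r = 0")
  case True then show ?thesis by (simp add: Cfull_def sum_distrib_left mult_ac)
next
  case False
  then have "bidiff (C r)" using assms(1) unfolding star_cochains_def by auto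
  then show ?thesis using False bidiff_lin2[OF _ assms(2-4)] by (simp add: Cfull_def)
qed

lemma Cfull_lin1:
  assumes "star_cochains C" "smooth a" "finite J" "\<forall>j\<in>J. smooth (g j)"
  shows "Cfull C r (\<lambda>x. \<Sum>j\<in>J. c j * g j x) a x = (\<Sum>j\<in>J. c j * Cfull C r (g j) a x)"
proof (cases "r = 0")
  case True then show ?thesis by (simp add: Cfull_def sum_distrib_left sum_distrib_right mult_ac)
next
  case False
  then have "bidiff (C r)" using assms(1) unfolding star_cochains_def by auto
  then show ?thesis using False bidiff_lin1[OF _ assms(2-4)] by (simp add: Cfull_def)
qed

lemma star_smooth:
  assumes "star_cochains C" "smooth_ser F" "smooth_ser G"
  shows "smooth_ser (star C F G)"
  unfolding smooth_ser_def star_def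
proof
  fix m
  show "smooth (\<lambda>x. \<Sum>p\<le>m. \<Sum>q\<le>m - p. \<i> ^ (m - p - q) * Cfull C (m - p - q) (F p) (G q) x)"
    using assms unfolding smooth_ser_def
    by (auto intro!: smooth_sum[where g="\<lambda>p x. \<Sum>q\<le>m - p. _ p q x"] smooth_lincomb Cfull_smooth)
qed

lemma emb_smooth: "smooth f \<Longrightarrow> smooth_ser (emb f)"
  unfolding smooth_ser_def emb_def by (auto simp: smooth_const)

lemma lstar_Cons: "lstar C (a # l) F = star C (emb (coord a)) (lstar C l F)"
  unfolding lstar_def by simp

lemma lstar_smooth: "star_cochains C \<Longrightarrow> smooth_ser F \<Longrightarrow> smooth_ser (lstar C l F)"
  by (induction l) (auto simp: lstar_Cons intro!: star_smooth emb_smooth smooth_coord, simp add: lstar_def)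

lemma star_lin2:
  assumes "star_cochains C" "smooth_ser F" "finite J" "\<forall>j\<in>J. smooth_ser (G j)"
  shows "star C F (\<lambda>m x. \<Sum>j\<in>J. c j * G j m x) m x = (\<Sum>j\<in>J. c j * star C F (G j) m x)"
proof -
  have "star C F (\<lambda>m x. \<Sum>j\<in>J. c j * G j m x) m x =
     (\<Sum>p\<le>m. \<Sum>q\<le>m - p. \<Sum>j\<in>J. c j * (\<i> ^ (m - p - q) * Cfull C (m - p - q) (F p) (G j q) x))"
    unfolding star_def using assms unfolding smooth_ser_def
    by (simp add: Cfull_lin2[OF assms(1) _ assms(3)] sum_distrib_left mult_ac)
  also have "\<dots> = (\<Sum>j\<in>J. \<Sum>p\<le>m. \<Sum>q\<le>m - p. c j * (\<i> ^ (m - p - q) * Cfull C (m - p - q) (F p) (G j q) x))"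
    by (subst sum.swap, rule sum.cong, simp, subst sum.swap, simp)
  also have "\<dots> = (\<Sum>j\<in>J. c j * star C F (G j) m x)"
    unfolding star_def by (simp add: sum_distrib_left)
  finally show ?thesis .
qed

lemma star_lin1:
  assumes "star_cochains C" "smooth_ser F" "finite J" "\<forall>j\<in>J. smooth_ser (G j)"
  shows "star C (\<lambda>m x. \<Sum>j\<in>J. c j * G j m x) F m x = (\<Sum>j\<in>J. c j * star C (G j) F m x)"
proof -
  have "star C (\<lambda>m x. \<Sum>j\<in>J. c j * G j m x) F m x =
     (\<Sum>p\<le>m. \<Sum>q\<le>m - p. \<Sum>j\<in>J. c j * (\<i> ^ (m - p - q) * Cfull C (m - p - q) (G j p) (F q) x))"
    unfolding star_def using assms unfolding smooth_ser_def
    by (simp add: Cfull_lin1[OF assms(1) _ assms(3)] sum_distrib_left mult_ac)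
  also have "\<dots> = (\<Sum>j\<in>J. \<Sum>p\<le>m. \<Sum>q\<le>m - p. c j * (\<i> ^ (m - p - q) * Cfull C (m - p - q) (G j p) (F q) x))"
    by (subst sum.swap, rule sum.cong, simp, subst sum.swap, simp)
  also have "\<dots> = (\<Sum>j\<in>J. c j * star C (G j) F m x)"
    unfolding star_def by (simp add: sum_distrib_left)
  finally show ?thesis .
qed


lemma perm_list_bij:
  "bij_betw (\<lambda>\<sigma>. map \<sigma> [0..<m]) {\<sigma>. \<sigma> permutes {..<m}} (permutations_of_set {..<m})"
proof (rule bij_betw_imageI)
  show "inj_on (\<lambda>\<sigma>. map \<sigma> [0..<m]) {\<sigma>. \<sigma> permutes {..<m}}"
  proof (rule inj_onI)
    fix \<sigma> \<tau> assume s: "\<sigma> \<in> {\<sigma>. \<sigma> permutes {..<m}}" and t: "\<tau> \<in> {\<sigma>. \<sigma> permutes {..<m}}"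
      and eq: "map \<sigma> [0..<m] = map \<tau> [0..<m]"
    show "\<sigma> = \<tau>"
    proof
      fix j show "\<sigma> j = \<tau> j"
      proof (cases "j < m")
        case True then show ?thesis using eq by (metis map_eq_conv atLeastLessThan_iff set_upt zero_le)
      next
        case False then show ?thesis using s t by (simp add: permutes_def)
      qed
    qed
  qed
  show "(\<lambda>\<sigma>. map \<sigma> [0..<m]) ` {\<sigma>. \<sigma> permutes {..<m}} = permutations_of_set {..<m}"
  proof
    show "(\<lambda>\<sigma>. map \<sigma> [0..<m]) ` {\<sigma>. \<sigma> permutes {..<m}} \<subseteq> permutations_of_set {..<m}"
    proof clarify
      fix \<sigma> :: "nat \<Rightarrow> nat" assume p: "\<sigma> permutes {..<m}"
      have "set (map \<sigma> [0..<m]) = {..<m}"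
        using permutes_image[OF p] by (simp add: atLeast0LessThan)
      moreover have "distinct (map \<sigma> [0..<m])"
        using permutes_inj_on[OF p] by (simp add: distinct_map inj_on_subset)
      ultimately show "map \<sigma> [0..<m] \<in> permutations_of_set {..<m}" by blast
    qed
  next
    show "permutations_of_set {..<m} \<subseteq> (\<lambda>\<sigma>. map \<sigma> [0..<m]) ` {\<sigma>. \<sigma> permutes {..<m}}"
    proof
      fix ps assume ps: "ps \<in> permutations_of_set {..<m}"
      have len: "length ps = m" using length_finite_permutations_of_set[OF ps] by simp
      have sp: "set ps = {..<m}" "distinct ps" using permutations_of_setD[OF ps] by auto
      define \<sigma> where "\<sigma> j = (if j < m then ps ! j else j)" for j
      have inj: "inj_on \<sigma> {..<m}"
        using sp(2) len unfolding \<sigma>_def by (auto simp: inj_on_def nth_eq_iff_index_eq)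
      have im: "\<sigma> ` {..<m} = {..<m}"
      proof -
        have "\<sigma> ` {..<m} = (!) ps ` {..<m}" unfolding \<sigma>_def by auto
        also have "\<dots> = set (map ((!) ps) [0..<length ps])" using len by (simp add: atLeast0LessThan)
        also have "\<dots> = set ps" by (simp only: map_nth)
        finally have "\<sigma> ` {..<m} = set ps" .
        then show ?thesis using sp by simp
      qed
      have "\<sigma> permutes {..<m}"
        by (rule bij_imp_permutes) (simp_all add: bij_betw_def inj im, simp add: \<sigma>_def)
      moreover have "map \<sigma> [0..<m] = ps"
        using len by (auto intro!: nth_equalityI simp: \<sigma>_def)
      ultimately show "ps \<in> (\<lambda>\<sigma>. map \<sigma> [0..<m]) ` {\<sigma>. \<sigma> permutes {..<m}}" by force
    qed
  qed
qed

lemma PB: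
  assumes "bij_betw e {..<m} B"
  shows "(\<Sum>\<sigma>\<in>{\<sigma>. \<sigma> permutes {..<m}}. H (map (\<lambda>j. e (\<sigma> j)) [0..<m]))
       = (\<Sum>ps\<in>permutations_of_set B. H ps)"
proof -
  have inj: "inj_on e {..<m}" and B: "B = e ` {..<m}" using assms by (auto simp: bij_betw_def)
  have b2: "bij_betw (map e) (permutations_of_set {..<m}) (permutations_of_set B)"
  proof (rule bij_betw_imageI)
    show "inj_on (map e) (permutations_of_set {..<m})"
      by (rule inj_on_mapI) (use inj in \<open>auto dest: permutations_of_setD\<close>)
    show "map e ` permutations_of_set {..<m} = permutations_of_set B"
      unfolding B by (rule permutations_of_set_image_inj[OF inj, symmetric])
  qed
  have "bij_betw (\<lambda>\<sigma>. map e (map \<sigma> [0..<m])) {\<sigma>. \<sigma> permutes {..<m}} (permutations_of_set B)"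
    using bij_betw_trans[OF perm_list_bij b2] by (simp add: comp_def)
  from sum.reindex_bij_betw[OF this, of H] show ?thesis by (simp add: map_map comp_def)
qed

lemma perm_sum_split:
  assumes "finite A" "A \<noteq> {}"
  shows "(\<Sum>ps\<in>permutations_of_set A. H ps) = (\<Sum>k\<in>A. \<Sum>ps\<in>permutations_of_set (A - {k}). H (k # ps))"
proof -
  have "(\<Sum>ps\<in>permutations_of_set A. H ps) =
        (\<Sum>k\<in>A. \<Sum>ps\<in>(\<lambda>xs. k # xs) ` permutations_of_set (A - {k}). H ps)"
    unfolding permutations_of_set_nonempty[OF assms(2)]
    by (rule sum.UNION_disjoint) (use assms(1) in auto)
  also have "\<dots> = (\<Sum>k\<in>A. \<Sum>ps\<in>permutations_of_set (A - {k}). H (k # ps))"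
    by (rule sum.cong, simp, subst sum.reindex) (auto simp: inj_on_def)
  finally show ?thesis .
qed


lemma rm_nth:
  assumes "k < length is" "j < length is - 1"
  shows "(take k is @ drop (Suc k) is) ! j = is ! (if j < k then j else Suc j)"
  using assms by (auto simp: nth_append min_def)

lemma ek_bij:
  assumes "k < n"
  shows "bij_betw (\<lambda>j. if j < k then j else Suc j) {..<n - 1} ({..<n} - {k})"
proof (rule bij_betw_imageI)
  show "inj_on (\<lambda>j. if j < k then j else Suc j) {..<n - 1}" by (auto simp: inj_on_def)
  show "(\<lambda>j. if j < k then j else Suc j) ` {..<n - 1} = {..<n} - {k}"
  proof
    show "(\<lambda>j. if j < k then j else Suc j) ` {..<n - 1} \<subseteq> {..<n} - {k}" using assms by auto
    show "{..<n} - {k} \<subseteq> (\<lambda>j. if j < k then j else Suc j) ` {..<n - 1}"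
    proof
      fix y assume y: "y \<in> {..<n} - {k}"
      show "y \<in> (\<lambda>j. if j < k then j else Suc j) ` {..<n - 1}"
      proof (cases "y < k")
        case True then show ?thesis using y assms by (auto intro!: image_eqI[of _ _ y])
      next
        case False then show ?thesis using y assms by (auto intro!: image_eqI[of _ _ "y - 1"])
      qed
    qed
  qed
qed

lemma Key:
  fixes C :: "nat \<Rightarrow> ('n::finite) func \<Rightarrow> 'n func \<Rightarrow> 'n func"
  assumes C: "star_cochains C" and W: "weyl C" and n: "length is \<ge> 2" and g: "smooth g"
  shows "(\<Sum>k<length is. star C (emb (coord (is ! k)))
            (star C (emb (coordprod (take k is @ drop (Suc k) is))) (emb g)) m x)
         = of_nat (length is) * star C (emb (coordprod is)) (emb g) m x"
proof -
  define n where "n = length is"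
  define T where "T = (\<Sum>ps\<in>permutations_of_set {..<n}. lstar C (map ((!) is) ps) (emb g) m x)"
  define c where "c = (1 / of_nat (fact (n - 1)) :: complex)"
  have gs: "smooth_ser (emb g)" using g by (rule emb_smooth)
  have inner: "star C (emb (coord (is ! k)))
            (star C (emb (coordprod (take k is @ drop (Suc k) is))) (emb g)) m x
      = c * (\<Sum>ps\<in>permutations_of_set ({..<n} - {k}). lstar C (map ((!) is) (k # ps)) (emb g) m x)"
    if k: "k < n" for k
  proof -
    define l where "l = take k is @ drop (Suc k) is"
    have ll: "length l = n - 1" using k unfolding l_def n_def by auto
    have "star C (emb (coordprod l)) (emb g) =
        (\<lambda>m x. (1 / of_nat (fact (length l))) *
         (\<Sum>\<sigma>\<in>{\<sigma>. \<sigma> permutes {..<length l}}. lstar C (map (\<lambda>j. l ! \<sigma> j) [0..<length l]) (emb g) m x))"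
      using W g ll n unfolding weyl_def n_def by auto
    also have "\<dots> = (\<lambda>m x. \<Sum>\<sigma>\<in>{\<sigma>. \<sigma> permutes {..<n - 1}}. c *
          lstar C (map (\<lambda>j. l ! \<sigma> j) [0..<n - 1]) (emb g) m x)"
      unfolding ll c_def by (simp add: sum_distrib_left)
    finally have e1: "star C (emb (coordprod l)) (emb g) = \<dots>" .
    have "star C (emb (coord (is ! k))) (star C (emb (coordprod l)) (emb g)) m x
       = (\<Sum>\<sigma>\<in>{\<sigma>. \<sigma> permutes {..<n - 1}}. c *
          star C (emb (coord (is ! k))) (lstar C (map (\<lambda>j. l ! \<sigma> j) [0..<n - 1]) (emb g)) m x)"
      unfolding e1
      by (rule star_lin2[OF C emb_smooth[OF smooth_coord]])
         (auto intro: finite_permutations lstar_smooth[OF C gs])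
    also have "\<dots> = c * (\<Sum>\<sigma>\<in>{\<sigma>. \<sigma> permutes {..<n - 1}}.
          lstar C (map ((!) is) (k # map (\<lambda>j. if j < k then j else Suc j) (map \<sigma> [0..<n - 1]))) (emb g) m x)"
    proof -
      have "map (\<lambda>j. l ! \<sigma> j) [0..<n - 1] = map ((!) is) (map (\<lambda>j. if j < k then j else Suc j) (map \<sigma> [0..<n - 1]))"
        if "\<sigma> permutes {..<n - 1}" for \<sigma>
      proof -
        have "\<And>j. j < n - 1 \<Longrightarrow> \<sigma> j < n - 1"
          using permutes_in_image[OF that] by auto
        then show ?thesis using rm_nth[of k "is"] k unfolding l_def n_def by auto
      qed
      then have "\<And>\<sigma>. \<sigma> \<in> {\<sigma>. \<sigma> permutes {..<n - 1}} \<Longrightarrow> c *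
          star C (emb (coord (is ! k))) (lstar C (map (\<lambda>j. l ! \<sigma> j) [0..<n - 1]) (emb g)) m x
        = c * lstar C (map ((!) is) (k # map (\<lambda>j. if j < k then j else Suc j) (map \<sigma> [0..<n - 1]))) (emb g) m x"
        by (simp only: mem_Collect_eq list.map(2) lstar_Cons)
      then show ?thesis unfolding sum_distrib_left by (rule sum.cong[OF refl])
    qed
    also have "\<dots> = c * (\<Sum>ps\<in>permutations_of_set ({..<n} - {k}). lstar C (map ((!) is) (k # ps)) (emb g) m x)"
      using PB[OF ek_bij[OF k], of "\<lambda>ps. lstar C (map ((!) is) (k # ps)) (emb g) m x"]
      by (simp add: map_map comp_def)
    finally show ?thesis unfolding l_def .
  qed
  have "(\<Sum>k<length is. star C (emb (coord (is ! k)))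
            (star C (emb (coordprod (take k is @ drop (Suc k) is))) (emb g)) m x)
     = c * (\<Sum>k<n. \<Sum>ps\<in>permutations_of_set ({..<n} - {k}). lstar C (map ((!) is) (k # ps)) (emb g) m x)"
    unfolding n_def[symmetric] by (simp add: inner sum_distrib_left)
  also have "\<dots> = c * T"
    unfolding T_def using n unfolding n_def
    by (subst perm_sum_split[of "{..<length is}"]) (auto simp: lessThan_empty_iff)
  finally have L: "(\<Sum>k<length is. star C (emb (coord (is ! k)))
            (star C (emb (coordprod (take k is @ drop (Suc k) is))) (emb g)) m x) = c * T" .
  have "star C (emb (coordprod is)) (emb g) m x = (1 / of_nat (fact n)) *
         (\<Sum>\<sigma>\<in>{\<sigma>. \<sigma> permutes {..<n}}. lstar C (map (\<lambda>j. is ! \<sigma> j) [0..<n]) (emb g) m x)"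
    using W g n unfolding weyl_def n_def by auto
  also have "\<dots> = (1 / of_nat (fact n)) * T"
    using PB[of id n "{..<n}" "\<lambda>ps. lstar C (map ((!) is) ps) (emb g) m x"]
    unfolding T_def by (simp add: map_map comp_def)
  finally have R: "star C (emb (coordprod is)) (emb g) m x = (1 / of_nat (fact n)) * T" .
  have fn: "fact n = n * fact (n - 1)" using n unfolding n_def by (cases "length is") (simp_all only: fact_Suc diff_Suc_1 of_nat_id)
  have "n \<noteq> 0" using n unfolding n_def by linarith
  hence nz: "(of_nat n :: complex) \<noteq> 0" by simp
  have fz: "(of_nat (fact (n - 1)) :: complex) \<noteq> 0" by simp
  have cf: "of_nat n * (1 / of_nat (fact n)) = c" unfolding c_def fn of_nat_mult
    using nz fz by (simp add: field_simps)
  have "c * T = of_nat n * ((1 / of_nat (fact n)) * T)" by (simp only: mult.assoc[symmetric] cf)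
  then show ?thesis using L R unfolding n_def by simp
qed


theorem proposition2:
  fixes C :: "nat \<Rightarrow> ('n::finite) func \<Rightarrow> 'n func \<Rightarrow> 'n func"
    and "is" :: "'n list" and f :: "'n func"
  assumes "star_cochains C" and "weyl C" and "stable_unity C"
    and "length is \<ge> 2" and "smooth f"
  shows "(\<lambda>m x. \<Sum>k<length is.
            associator C (emb (coord (is ! k)))
              (emb (coordprod (take k is @ drop (Suc k) is))) (emb f) m x)
         = (\<lambda>m x. 0)"
proof (intro ext)
  fix m x
  note C = assms(1)
  define n where "n = length is"
  let ?X = "\<lambda>k. emb (coord (is ! k))"
  let ?P = "\<lambda>k. emb (coordprod (take k is @ drop (Suc k) is))"
  have A: "(\<Sum>k<n. star C (?X k) (star C (?P k) (emb f)) m x)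
      = of_nat n * star C (emb (coordprod is)) (emb f) m x"
    using Key[OF assms(1,2,4,5)] unfolding n_def .
  have PU: "star C (?P k) (emb (\<lambda>_. 1)) = ?P k" for k
    using assms(3) smooth_coordprod unfolding stable_unity_def by blast
  have PU2: "star C (emb (coordprod is)) (emb (\<lambda>_. 1)) = emb (coordprod is)"
    using assms(3) smooth_coordprod unfolding stable_unity_def by blast
  have S1: "(\<Sum>k<n. 1 * star C (?X k) (?P k) m' x') = (\<Sum>j\<in>{0::nat}. of_nat n * emb (coordprod is) m' x')"
    for m' x'
    using Key[OF assms(1,2,4) smooth_const, of "1" m' x'] unfolding n_def PU PU2 by simp
  have sm: "\<forall>k\<in>{..<n}. smooth_ser (star C (?X k) (?P k))"
    by (auto intro!: star_smooth[OF C] emb_smooth smooth_coord smooth_coordprod)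
  have "(\<Sum>k<n. star C (star C (?X k) (?P k)) (emb f) m x)
      = (\<Sum>k<n. 1 * star C (star C (?X k) (?P k)) (emb f) m x)" by simp
  also have "\<dots> = star C (\<lambda>m x. \<Sum>k<n. 1 * star C (?X k) (?P k) m x) (emb f) m x"
    by (rule star_lin1[OF C emb_smooth[OF assms(5)] _ sm, symmetric]) simp
  also have "\<dots> = star C (\<lambda>m x. \<Sum>j\<in>{0::nat}. of_nat n * emb (coordprod is) m x) (emb f) m x"
    by (simp only: S1)
  also have "\<dots> = (\<Sum>j\<in>{0::nat}. of_nat n * star C (emb (coordprod is)) (emb f) m x)"
    by (rule star_lin1[OF C emb_smooth[OF assms(5)]]) (auto intro: emb_smooth smooth_coordprod)
  finally have B: "(\<Sum>k<n. star C (star C (?X k) (?P k)) (emb f) m x)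
      = of_nat n * star C (emb (coordprod is)) (emb f) m x" by simp
  show "(\<Sum>k<length is. associator C (?X k) (?P k) (emb f) m x) = 0"
    unfolding associator_def n_def[symmetric] sum_subtractf A B by simp
qed

end
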